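(* In the two-type setting, define $\bar h:\mathbb R\times[0,1]\to\mathbb R\times[0,1]$ by $\bar h(p)=\big(\phi_1p_1\psi(\beta_2p_2),\,h_2(0,p_2)\big)$. Then for every fixed $k\in\mathbb N$, $$\lim_{p_1\to0^+}\frac{\bar h^k_1(p)}{h^k_1(p)}=1\qquad\text{uniformly in }p_2\in[0,1],$$ where $\bar h^k_1$ and $h^k_1$ denote the first coordinates of the $k$-th iterates of $\bar h$ and $h$.
   Context: Two-type limiting map: $\beta_1,\beta_2>0$, $\alpha(1),\alpha(2)\in[0,1)$, $\phi_i=(1-\alpha(i))\beta_i$. For $p\in[0,1]^2$, $S(p)=\beta_1p_1+\beta_2p_2$ and $f^{(i)}(p)=(1-e^{-S(p)})\beta_ip_i/S(p)$ ($=0$ if $S(p)=0$). For $\alpha\in(0,1)$ let $g_\alpha(x)=\frac{(1-\sqrt{1-4(1-\alpha)x(1-x)})^3}{8(1-\alpha)^2x^2}$ for $x\in(0,1]$ and $g_\alpha(0)=0$; let $g_0(x)=x$ for $x\le1/2$ and $g_0(x)=(1-x)^3/x^2$ for $x>1/2$. $h(p)=(h_1(p),h_2(p))$ with $h_i(p)=g_{\alpha(i)}(f^{(i)}(p))$. $\psi(x)=(1-e^{-x})/x$, $\psi(0)=1$. *)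

theory Defs
  imports "HOL-Analysis.Analysis"
begin

text \<open>Two-type limiting map. Points p are pairs (p1, p2). Parameters: b1 b2 (the betas),
  a1 a2 (alpha(1), alpha(2)).\<close>

definition S2 :: "real \<Rightarrow> real \<Rightarrow> real \<times> real \<Rightarrow> real" where
  "S2 b1 b2 p = b1 * fst p + b2 * snd p"

definition f1 :: "real \<Rightarrow> real \<Rightarrow> real \<times> real \<Rightarrow> real" where
  "f1 b1 b2 p = (if S2 b1 b2 p = 0 then 0
     else (1 - exp (- S2 b1 b2 p)) * b1 * fst p / S2 b1 b2 p)"

definition f2 :: "real \<Rightarrow> real \<Rightarrow> real \<times> real \<Rightarrow> real" where
  "f2 b1 b2 p = (if S2 b1 b2 p = 0 then 0
     else (1 - exp (- S2 b1 b2 p)) * b2 * snd p / S2 b1 b2 p)"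

definition g :: "real \<Rightarrow> real \<Rightarrow> real" where
  "g a x = (if a = 0 then (if x \<le> 1/2 then x else (1 - x)^3 / x^2)
     else (if x = 0 then 0
           else (1 - sqrt (1 - 4 * (1 - a) * x * (1 - x)))^3 / (8 * (1 - a)^2 * x^2)))"

definition hmap :: "real \<Rightarrow> real \<Rightarrow> real \<Rightarrow> real \<Rightarrow> real \<times> real \<Rightarrow> real \<times> real" where
  "hmap b1 b2 a1 a2 p = (g a1 (f1 b1 b2 p), g a2 (f2 b1 b2 p))"

definition psi :: "real \<Rightarrow> real" where
  "psi x = (if x = 0 then 1 else (1 - exp (- x)) / x)"

text \<open>hbar(p) = (phi_1 p1 psi(beta_2 p2), h_2(0, p2)), with phi_1 = (1 - alpha(1)) beta_1.\<close>
definition hbar :: "real \<Rightarrow> real \<Rightarrow> real \<Rightarrow> real \<Rightarrow> real \<times> real \<Rightarrow> real \<times> real" where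
  "hbar b1 b2 a1 a2 p = ((1 - a1) * b1 * fst p * psi (b2 * snd p),
                         snd (hmap b1 b2 a1 a2 (0, snd p)))"

end

theory Submission
  imports Defs
begin

lemma psi_cont: "isCont psi x"
proof (cases "x = 0")
  case True
  have d: "((\<lambda>y. 1 - exp (- y)) has_field_derivative 1) (at (0::real))"
    by (auto intro!: derivative_eq_intros)
  hence "((\<lambda>y. ((1 - exp (- y)) - (1 - exp (- 0))) / (y - 0)) \<longlongrightarrow> 1) (at (0::real))"
    by (simp only: has_field_derivative_iff)
  hence "((\<lambda>y. (1 - exp (- y)) / y) \<longlongrightarrow> 1) (at (0::real))" by simp
  hence "(psi \<longlongrightarrow> 1) (at 0)"
    by (rule tendsto_cong[THEN iffD1, rotated]) (auto simp: psi_def eventually_at_filter)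
  thus ?thesis using True by (simp add: isCont_def psi_def)
next
  case False
  have "eventually (\<lambda>y. y \<noteq> 0) (nhds x)" using False
    by (simp add: eventually_nhds_metric) (metis dist_commute dist_real_def abs_dist_diff_le diff_zero order_less_irrefl zero_less_abs_iff)
  hence ev: "eventually (\<lambda>y. psi y = (1 - exp (- y)) / y) (nhds x)"
    by eventually_elim (simp add: psi_def)
  moreover have "isCont (\<lambda>y. (1 - exp (- y)) / y) x" using False
    by (auto intro!: continuous_intros)
  ultimately show ?thesis using isCont_cong[OF ev] by blast
qed

lemma psi_cont_on[continuous_intros]: "continuous_on S F \<Longrightarrow> continuous_on S (\<lambda>p. psi (F p))"
  by (rule continuous_on_compose2[OF continuous_at_imp_continuous_on[OF ballI[OF psi_cont]], of S F UNIV]) auto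

lemma psi_mult: "psi x * x = 1 - exp (- x)"
  by (simp add: psi_def)

lemma psi_pos: "psi x > 0"
proof -
  consider "x = 0" | "x > 0" | "x < 0" by linarith
  thus ?thesis
  proof cases
    case 2 then show ?thesis by (simp add: psi_def)
  next
    case 3 then have "exp (- x) > 1" by simp
    with 3 show ?thesis by (simp add: psi_def divide_neg_neg)
  qed (simp add: psi_def)
qed

definition Gf :: "real \<Rightarrow> real \<Rightarrow> real" where
  "Gf a x = 8*(1-a)*(1-x)^3 / (1 + sqrt (max 0 (1 - 4*(1-a)*x*(1-x))))^3"

lemma Gf_den: "(1 + sqrt (max 0 y))^3 \<ge> (1::real)"
  by (simp add: one_le_power)

lemma Gf_den1: "1 + sqrt (max 0 y) \<noteq> (0::real)"
proof -
  have "sqrt (max 0 y) \<ge> 0" by simp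
  thus ?thesis by linarith
qed

lemma Gf_cont[continuous_intros]: "continuous_on S F \<Longrightarrow> continuous_on S (\<lambda>p. Gf a (F p))"
  unfolding Gf_def
  apply (intro continuous_intros)
  apply (auto simp: intro!: continuous_intros)
  by (metis Gf_den1)

lemma Gf_pos: "x < 1 \<Longrightarrow> a < 1 \<Longrightarrow> Gf a x > 0"
  unfolding Gf_def by (intro divide_pos_pos) (auto intro!: add_pos_nonneg)

lemma Gf_0: "Gf a 0 = 1 - a" by (simp add: Gf_def)

lemma g_eq:
  assumes "0 \<le> a" "a < 1" "0 \<le> x" "x \<le> 1"
  shows "g a x = x * Gf a x"
proof (cases "a = 0")
  case True
  have "1 - 4*(1-a)*x*(1-x) = (1 - 2*x)^2" using True
    by (simp add: power2_eq_square algebra_simps)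
  hence m: "max 0 (1 - 4*(1-a)*x*(1-x)) = (1 - 2*x)^2" by simp
  show ?thesis
  proof (cases "x \<le> 1/2")
    case t: True
    hence "sqrt (max 0 (1 - 4*(1-a)*x*(1-x))) = 1 - 2*x" using t by (subst m) simp
    hence "Gf a x = 8*(1-x)^3 / (2*(1-x))^3" using True by (simp add: Gf_def)
    also have "\<dots> = 1" using t by (simp add: power_mult_distrib) (simp add: power3_eq_cube algebra_simps)
    finally show ?thesis using True t by (simp add: g_def)
  next
    case f: False
    hence "sqrt (max 0 (1 - 4*(1-a)*x*(1-x))) = 2*x - 1" using f by (subst m) simp
    hence "Gf a x = 8*(1-x)^3 / (2*x)^3" using True by (simp add: Gf_def)
    also have "\<dots> = (1-x)^3/x^3" by (simp add: power_mult_distrib)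
    finally show ?thesis using True f by (simp add: g_def power2_eq_square power3_eq_cube)
  qed
next
  case False
  hence a: "0 < a" using assms by simp
  show ?thesis
  proof (cases "x = 0")
    case True then show ?thesis using False by (simp add: g_def)
  next
    case xn: False
    define D where "D = 4*(1-a)*x*(1-x)"
    have D0: "0 \<le> D" using assms by (simp add: D_def)
    have "4*x*(1-x) \<le> 1" using zero_le_power2[of "2*x-1"] by (simp add: power2_eq_square algebra_simps)
    moreover have "(1-a)*(4*x*(1-x)) \<le> 1*(4*x*(1-x))"
      using assms by (intro mult_right_mono) auto
    ultimately have "D \<le> 1" unfolding D_def by (simp add: algebra_simps)
    define s where "s = sqrt (1 - D)"
    have s0: "0 \<le> s" using \<open>D \<le> 1\<close> by (simp add: s_def)
    have ss: "s^2 = 1 - D" using \<open>D \<le> 1\<close> by (simp add: s_def)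
    have "1 - s = D / (1 + s)" using s0 ss by (simp add: field_simps power2_eq_square)
    hence e1: "(1 - s)^3 = D^3 / (1+s)^3" by (simp add: power_divide)
    have mx: "max 0 (1 - 4*(1-a)*x*(1-x)) = 1 - D" using \<open>D \<le> 1\<close> by (simp add: D_def)
    have "g a x = (1 - s)^3 / (8 * (1 - a)^2 * x^2)" using False xn
      by (simp add: g_def s_def D_def)
    also have "\<dots> = D^3 / ((1+s)^3 * (8 * (1 - a)^2 * x^2))" by (simp add: e1)
    also have "\<dots> = x * (8*(1-a)*(1-x)^3 / (1+s)^3)"
    proof -
      have c: "(1+s)^3 > 0" using s0 by simp
      have n: "8 * (1 - a)^2 * x^2 \<noteq> 0" using xn assms by simp
      have D3: "D^3 = (x*(8*(1-a)*(1-x)^3)) * (8*(1-a)^2*x^2)"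
        by (simp add: D_def power2_eq_square power3_eq_cube algebra_simps)
      show ?thesis using c n by (simp add: D3)
    qed
    also have "\<dots> = x * Gf a x" by (simp only: Gf_def mx s_def)
    finally show ?thesis .
  qed
qed

definition DD :: "(real \<times> real) set" where "DD = {p. 0 \<le> fst p \<and> 0 \<le> snd p}"

lemma prod_rng: "0 \<le> (a::real) \<Longrightarrow> a < 1 \<Longrightarrow> 0 \<le> r \<Longrightarrow> r \<le> 1 \<Longrightarrow> 0 \<le> a * r \<and> a * r < 1"
proof -
  assume h: "0 \<le> a" "a < 1" "0 \<le> r" "r \<le> 1"
  have "a * r \<le> a * 1" using h by (intro mult_left_mono) auto
  thus ?thesis using h by simp
qed

lemma frac_rng:
  fixes S y :: real
  assumes "S > 0" "0 \<le> y" "y \<le> S"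
  shows "0 \<le> (1 - exp (- S)) * y / S \<and> (1 - exp (- S)) * y / S < 1"
proof -
  have "- S < 0" using assms by simp
  hence "exp (- S) < exp 0" by (subst exp_less_cancel_iff)
  hence "exp (- S) < 1" by simp
  moreover have "exp (- S) > 0" by simp
  ultimately have e: "0 \<le> 1 - exp (- S)" "1 - exp (- S) < 1" by linarith+
  have r: "0 \<le> y / S" "y / S \<le> 1" using assms by auto
  show ?thesis using prod_rng[OF e r] by simp
qed

context
  fixes b1 b2 a1 a2 :: real
  assumes b1: "b1 > 0" and b2: "b2 > 0" and a1: "0 \<le> a1" "a1 < 1" and a2: "0 \<le> a2" "a2 < 1"
begin

definition "AA p = b1 * psi (S2 b1 b2 p) * Gf a1 (b1 * fst p * psi (S2 b1 b2 p))"
definition "BB p = b2 * snd p * psi (S2 b1 b2 p) * Gf a2 (b2 * snd p * psi (S2 b1 b2 p))"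

lemma AA_cont: "continuous_on UNIV AA"
  unfolding AA_def S2_def
  by (intro continuous_intros)

lemma BB_cont: "continuous_on UNIV BB"
  unfolding BB_def S2_def
  by (intro continuous_intros)

lemma S2_zero: "p \<in> DD \<Longrightarrow> S2 b1 b2 p = 0 \<Longrightarrow> fst p = 0 \<and> snd p = 0"
proof -
  assume p: "p \<in> DD" and s: "S2 b1 b2 p = 0"
  have "b1 * fst p \<ge> 0" "b2 * snd p \<ge> 0" using p b1 b2 by (auto simp: DD_def)
  hence "b1 * fst p = 0" "b2 * snd p = 0" using s unfolding S2_def by linarith+
  thus ?thesis using b1 b2 by simp
qed

lemma S2_ge: "p \<in> DD \<Longrightarrow> b1 * fst p \<le> S2 b1 b2 p \<and> b2 * snd p \<le> S2 b1 b2 p \<and> 0 \<le> S2 b1 b2 p"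
  using b1 b2 unfolding DD_def S2_def by simp

lemma f1_eq: "p \<in> DD \<Longrightarrow> f1 b1 b2 p = b1 * fst p * psi (S2 b1 b2 p)"
  using S2_zero[of p] by (auto simp: f1_def psi_def)

lemma f2_eq: "p \<in> DD \<Longrightarrow> f2 b1 b2 p = b2 * snd p * psi (S2 b1 b2 p)"
  using S2_zero[of p] by (auto simp: f2_def psi_def)

lemma f1_rng: "p \<in> DD \<Longrightarrow> 0 \<le> f1 b1 b2 p \<and> f1 b1 b2 p < 1"
proof -
  assume p: "p \<in> DD"
  show ?thesis
  proof (cases "S2 b1 b2 p = 0")
    case True then show ?thesis by (simp add: f1_def)
  next
    case False
    hence S: "S2 b1 b2 p > 0" using S2_ge[OF p] by linarith
    have y: "0 \<le> b1 * fst p" using p b1 by (simp add: DD_def)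
    have e: "f1 b1 b2 p = (1 - exp (- S2 b1 b2 p)) * (b1 * fst p) / S2 b1 b2 p"
      using False by (simp add: f1_def mult.assoc)
    show ?thesis unfolding e by (rule frac_rng[OF S y]) (use S2_ge[OF p] in blast)
  qed
qed

lemma f2_rng: "p \<in> DD \<Longrightarrow> 0 \<le> f2 b1 b2 p \<and> f2 b1 b2 p < 1"
proof -
  assume p: "p \<in> DD"
  show ?thesis
  proof (cases "S2 b1 b2 p = 0")
    case True then show ?thesis by (simp add: f2_def)
  next
    case False
    hence S: "S2 b1 b2 p > 0" using S2_ge[OF p] by linarith
    have y: "0 \<le> b2 * snd p" using p b2 by (simp add: DD_def)
    have e: "f2 b1 b2 p = (1 - exp (- S2 b1 b2 p)) * (b2 * snd p) / S2 b1 b2 p"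
      using False by (simp add: f2_def mult.assoc)
    show ?thesis unfolding e by (rule frac_rng[OF S y]) (use S2_ge[OF p] in blast)
  qed
qed

lemma hmap_eq: "p \<in> DD \<Longrightarrow> hmap b1 b2 a1 a2 p = (fst p * AA p, BB p)"
  using f1_rng[of p] f2_rng[of p] f1_eq[of p] f2_eq[of p] a1 a2
  unfolding hmap_def AA_def BB_def
  by (simp add: g_eq mult_ac)

lemma AA_pos: "p \<in> DD \<Longrightarrow> AA p > 0"
  using f1_rng[of p] f1_eq[of p] a1 b1 psi_pos unfolding AA_def
  by (intro mult_pos_pos Gf_pos) auto

lemma BB_nonneg: "p \<in> DD \<Longrightarrow> BB p \<ge> 0"
  using f2_rng[of p] f2_eq[of p] a2 b2 Gf_pos[of "f2 b1 b2 p" a2] psi_pos[of "S2 b1 b2 p"] unfolding BB_def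
  by (intro mult_nonneg_nonneg) (auto simp: DD_def)

lemma hbar_eq: "p \<in> DD \<Longrightarrow> hbar b1 b2 a1 a2 p = (fst p * AA (0, snd p), BB (0, snd p))"
proof -
  assume p: "p \<in> DD"
  hence z: "(0, snd p) \<in> DD" by (simp add: DD_def)
  show ?thesis using hmap_eq[OF z] unfolding hbar_def AA_def
    by (simp add: Gf_0 S2_def mult_ac)
qed

lemma hmap_DD: "p \<in> DD \<Longrightarrow> hmap b1 b2 a1 a2 p \<in> DD"
  using hmap_eq[of p] AA_pos[of p] BB_nonneg[of p] by (auto simp: DD_def)

lemma hbar_DD: "p \<in> DD \<Longrightarrow> hbar b1 b2 a1 a2 p \<in> DD"
proof -
  assume p: "p \<in> DD"
  hence z: "(0, snd p) \<in> DD" by (simp add: DD_def)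
  show ?thesis using hbar_eq[OF p] AA_pos[OF z] BB_nonneg[OF z] p by (auto simp: DD_def)
qed


lemma hmap_iter: "p \<in> DD \<Longrightarrow> (hmap b1 b2 a1 a2 ^^ k) p \<in> DD \<and>
   fst ((hmap b1 b2 a1 a2 ^^ k) p) = fst p * (\<Prod>j<k. AA ((hmap b1 b2 a1 a2 ^^ j) p))"
proof (induction k)
  case 0 then show ?case by simp
next
  case (Suc k)
  then show ?case using hmap_eq[of "(hmap b1 b2 a1 a2 ^^ k) p"] hmap_DD[of "(hmap b1 b2 a1 a2 ^^ k) p"]
    by (simp add: mult_ac)
qed

lemma hbar_iter: "p \<in> DD \<Longrightarrow> (hbar b1 b2 a1 a2 ^^ k) p \<in> DD \<and>
   fst ((hbar b1 b2 a1 a2 ^^ k) p) = fst p * (\<Prod>j<k. AA (0, snd ((hbar b1 b2 a1 a2 ^^ j) p)))"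
proof (induction k)
  case 0 then show ?case by simp
next
  case (Suc k)
  then show ?case using hbar_eq[of "(hbar b1 b2 a1 a2 ^^ k) p"] hbar_DD[of "(hbar b1 b2 a1 a2 ^^ k) p"]
    by (simp add: mult_ac)
qed

lemma hmap_cont: "continuous_on DD (hmap b1 b2 a1 a2)"
proof -
  have "continuous_on DD (\<lambda>p. (fst p * AA p, BB p))"
    by (intro continuous_intros continuous_on_subset[OF AA_cont] continuous_on_subset[OF BB_cont]) auto
  moreover have "continuous_on DD (hmap b1 b2 a1 a2) = continuous_on DD (\<lambda>p. (fst p * AA p, BB p))"
    by (rule continuous_on_cong) (auto simp: hmap_eq)
  ultimately show ?thesis by simp
qed

lemma hbar_cont: "continuous_on DD (hbar b1 b2 a1 a2)"
proof -
  have "continuous_on DD (\<lambda>p. (fst p * AA (0, snd p), BB (0, snd p)))"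
    by (intro continuous_intros continuous_on_compose2[OF AA_cont] continuous_on_compose2[OF BB_cont]) auto
  moreover have "continuous_on DD (hbar b1 b2 a1 a2) = continuous_on DD (\<lambda>p. (fst p * AA (0, snd p), BB (0, snd p)))"
    by (rule continuous_on_cong) (auto simp: hbar_eq)
  ultimately show ?thesis by simp
qed

lemma hmap_iter_cont: "continuous_on DD (\<lambda>p. (hmap b1 b2 a1 a2 ^^ k) p)"
proof (induction k)
  case 0 then show ?case by (simp add: continuous_on_id)
next
  case (Suc k)
  have "continuous_on DD (\<lambda>p. hmap b1 b2 a1 a2 ((hmap b1 b2 a1 a2 ^^ k) p))"
    by (rule continuous_on_compose2[OF hmap_cont Suc]) (use hmap_iter in auto)
  thus ?case by simp
qed

lemma hbar_iter_cont: "continuous_on DD (\<lambda>p. (hbar b1 b2 a1 a2 ^^ k) p)"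
proof (induction k)
  case 0 then show ?case by (simp add: continuous_on_id)
next
  case (Suc k)
  have "continuous_on DD (\<lambda>p. hbar b1 b2 a1 a2 ((hbar b1 b2 a1 a2 ^^ k) p))"
    by (rule continuous_on_compose2[OF hbar_cont Suc]) (use hbar_iter in auto)
  thus ?case by simp
qed

lemma agree: "0 \<le> q \<Longrightarrow> (hmap b1 b2 a1 a2 ^^ j) (0, q) = (hbar b1 b2 a1 a2 ^^ j) (0, q)
   \<and> fst ((hmap b1 b2 a1 a2 ^^ j) (0, q)) = 0"
proof (induction j arbitrary: q)
  case 0 then show ?case by simp
next
  case (Suc j)
  have z: "(0, q) \<in> DD" using Suc by (simp add: DD_def)
  have e1: "hmap b1 b2 a1 a2 (0, q) = (0, BB (0, q))" using hmap_eq[OF z] by simp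
  have e2: "hbar b1 b2 a1 a2 (0, q) = (0, BB (0, q))" using hbar_eq[OF z] by simp
  have i: "(hmap b1 b2 a1 a2 ^^ j) (0, BB (0, q)) = (hbar b1 b2 a1 a2 ^^ j) (0, BB (0, q))
   \<and> fst ((hmap b1 b2 a1 a2 ^^ j) (0, BB (0, q))) = 0" using Suc.IH[of "BB (0, q)"] BB_nonneg[OF z] by blast
  show ?case by (simp only: funpow_Suc_right o_apply e1 e2) (rule i)
qed

lemma main:
  "uniform_limit {0..1}
     (\<lambda>p1 p2. fst ((hbar b1 b2 a1 a2 ^^ k) (p1, p2)) / fst ((hmap b1 b2 a1 a2 ^^ k) (p1, p2)))
     (\<lambda>_. 1) (at_right 0)"
proof -
  define Pm where "Pm p = (\<Prod>j<k. AA ((hmap b1 b2 a1 a2 ^^ j) p))" for p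
  define Pb where "Pb p = (\<Prod>j<k. AA (0, snd ((hbar b1 b2 a1 a2 ^^ j) p)))" for p
  have Pm_pos: "Pm p > 0" if "p \<in> DD" for p
    unfolding Pm_def using hmap_iter[OF that] AA_pos by (intro prod_pos) auto
  have cPm: "continuous_on DD Pm" unfolding Pm_def
    by (intro continuous_intros continuous_on_compose2[OF AA_cont hmap_iter_cont]) auto
  have cPb: "continuous_on DD Pb" unfolding Pb_def
    by (intro continuous_intros continuous_on_compose2[OF AA_cont] continuous_on_compose2[OF continuous_on_snd hbar_iter_cont]) auto
  have cR: "continuous_on DD (\<lambda>p. Pb p / Pm p)"
    using Pm_pos by (intro continuous_intros cPm cPb) force
  define K where "K = {0..1::real} \<times> {0..1::real}"
  have KD: "K \<subseteq> DD" by (auto simp: K_def DD_def)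
  have "uniformly_continuous_on K (\<lambda>p. Pb p / Pm p)"
    by (rule compact_uniformly_continuous[OF continuous_on_subset[OF cR KD]]) (simp add: K_def compact_Times)
  have R0: "Pb (0, q) / Pm (0, q) = 1" if "0 \<le> q" for q
  proof -
    have "Pb (0, q) = Pm (0, q)" unfolding Pb_def Pm_def
    proof (rule prod.cong[OF refl])
      fix j
      have "(hmap b1 b2 a1 a2 ^^ j) (0, q) = (0, snd ((hbar b1 b2 a1 a2 ^^ j) (0, q)))"
        using agree[OF that, of j] by (metis prod.collapse)
      thus "AA (0, snd ((hbar b1 b2 a1 a2 ^^ j) (0, q))) = AA ((hmap b1 b2 a1 a2 ^^ j) (0, q))" by simp
    qed
    thus ?thesis using Pm_pos[of "(0,q)"] that by (simp add: DD_def)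
  qed
  show ?thesis unfolding uniform_limit_iff eventually_at_right_field
  proof (intro allI impI)
    fix e :: real assume e: "e > 0"
    then obtain d where d: "d > 0" and dd: "\<And>x x'. x \<in> K \<Longrightarrow> x' \<in> K \<Longrightarrow> dist x' x < d \<Longrightarrow>
       dist (Pb x' / Pm x') (Pb x / Pm x) < e"
      using \<open>uniformly_continuous_on K _\<close> unfolding uniformly_continuous_on_def by metis
    show "\<exists>b>0. \<forall>y>0. y < b \<longrightarrow> (\<forall>x\<in>{0..1}.
        dist (fst ((hbar b1 b2 a1 a2 ^^ k) (y, x)) / fst ((hmap b1 b2 a1 a2 ^^ k) (y, x))) 1 < e)"
    proof (intro exI[of _ "min d 1"] conjI allI impI ballI)
      fix y q :: real assume y: "0 < y" "y < min d 1" and q: "q \<in> {0..1}"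
      have K1: "(y, q) \<in> K" "(0, q) \<in> K" using y q by (auto simp: K_def)
      have "dist (y, q) (0, q) < d" using y by (simp add: dist_Pair_Pair dist_real_def)
      hence "dist (Pb (y,q) / Pm (y,q)) (Pb (0,q) / Pm (0,q)) < e" using dd K1 by blast
      moreover have r: "Pb (0, q) / Pm (0, q) = 1" by (rule R0) (use q in simp)
      ultimately have lt: "dist (Pb (y,q) / Pm (y,q)) 1 < e" by (simp only: r)
      have yD: "(y, q) \<in> DD" using y q by (simp add: DD_def)
      have "fst ((hbar b1 b2 a1 a2 ^^ k) (y, q)) / fst ((hmap b1 b2 a1 a2 ^^ k) (y, q))
            = (y * Pb (y,q)) / (y * Pm (y,q))"
        using hbar_iter[OF yD, of k] hmap_iter[OF yD, of k] by (simp add: Pb_def Pm_def)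
      also have "\<dots> = Pb (y,q) / Pm (y,q)" using y by simp
      finally show "dist (fst ((hbar b1 b2 a1 a2 ^^ k) (y, q)) / fst ((hmap b1 b2 a1 a2 ^^ k) (y, q))) 1 < e"
        using lt by simp
    qed (use d in auto)
  qed
qed

end

theorem mainTheorem17:
  fixes b1 b2 a1 a2 :: real and k :: nat
  assumes "b1 > 0" "b2 > 0" "0 \<le> a1" "a1 < 1" "0 \<le> a2" "a2 < 1"
  shows "uniform_limit {0..1}
           (\<lambda>p1 p2. fst ((hbar b1 b2 a1 a2 ^^ k) (p1, p2)) / fst ((hmap b1 b2 a1 a2 ^^ k) (p1, p2)))
           (\<lambda>_. 1) (at_right 0)"
  by (rule main[OF assms])

end
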